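(* Consider a gate set consisting of almost classical gates that includes CNOT and a diagonal gate $D$. Let $U=U_IU_{I-1}\cdots U_1$ with each $U_i$ from the gate set. Then, after appending ancilla qubits initialized to $|0\rangle$, $U$ can be compiled into an equivalent circuit of almost classical gates (acting as $U$ on the data qubits and returning the ancillas to $|0\rangle$) in which all gates of the form $D^k$, with $k$ an integer, lie in a single layer (i.e., act in parallel on distinct qubits).
   Context: A unitary $V$ on $n$ qubits is almost classical if $V=\sum_x e^{i\phi(x)}|f(x)\rangle\langle x|$ for some bijection $f:\{0,1\}^n\to\{0,1\}^n$ and phases $e^{i\phi(x)}\in U(1)$; i.e. it maps each computational basis state to a computational basis state times a phase (e.g. CNOT, permutation gates, diagonal phase gates). *)

theory Defs
  imports Complex_Main
begin

text \<open>Computational basis states of k qubits: bit strings of length k.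
  A k-qubit operator is given by its matrix entries  M y x = <y|M|x>,
  only the entries with x, y in bits k are meaningful.\<close>

type_synonym qmat = "bool list \<Rightarrow> bool list \<Rightarrow> complex"

definition bits :: "nat \<Rightarrow> bool list set" where
  "bits k = {xs. length xs = k}"

definition mat_eq :: "nat \<Rightarrow> qmat \<Rightarrow> qmat \<Rightarrow> bool" where
  "mat_eq k A B \<longleftrightarrow> (\<forall>x\<in>bits k. \<forall>y\<in>bits k. A y x = B y x)"

definition id_mat :: qmat where
  "id_mat y x = (if y = x then 1 else 0)"

definition mmult :: "nat \<Rightarrow> qmat \<Rightarrow> qmat \<Rightarrow> qmat" where
  "mmult k A B y x = (\<Sum>z\<in>bits k. A y z * B z x)"

definition adj :: "qmat \<Rightarrow> qmat" where
  "adj M y x = cnj (M x y)"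

fun mpow :: "nat \<Rightarrow> qmat \<Rightarrow> nat \<Rightarrow> qmat" where
  "mpow k M 0 = id_mat"
| "mpow k M (Suc j) = mmult k M (mpow k M j)"

text \<open>Integer powers of a unitary (negative powers via the inverse = adjoint).\<close>
definition mpowi :: "nat \<Rightarrow> qmat \<Rightarrow> int \<Rightarrow> qmat" where
  "mpowi k M i = (if 0 \<le> i then mpow k M (nat i) else mpow k (adj M) (nat (- i)))"

definition almost_classical :: "nat \<Rightarrow> qmat \<Rightarrow> bool" where
  "almost_classical k M \<longleftrightarrow>
     (\<exists>f \<phi>. bij_betw f (bits k) (bits k) \<and>
        (\<forall>x\<in>bits k. \<forall>y\<in>bits k. M y x = (if y = f x then cis (\<phi> x) else 0)))"

definition diagonal :: "nat \<Rightarrow> qmat \<Rightarrow> bool" where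
  "diagonal k M \<longleftrightarrow> (\<forall>x\<in>bits k. \<forall>y\<in>bits k. x \<noteq> y \<longrightarrow> M y x = 0)"

definition cnot :: qmat where
  "cnot y x = (if y = [x ! 0, x ! 0 \<noteq> x ! 1] then 1 else 0)"

text \<open>A gate application: (arity k, matrix M, list qs of the k qubits it acts on).\<close>
type_synonym gate_app = "nat \<times> qmat \<times> nat list"

definition wf_app :: "nat \<Rightarrow> gate_app \<Rightarrow> bool" where
  "wf_app N g = (case g of (k, M, qs) \<Rightarrow> length qs = k \<and> distinct qs \<and> set qs \<subseteq> {..<N})"

text \<open>Embedding of a gate acting on qubits qs into the N-qubit space (tensor with identity).\<close>
definition embed :: "nat \<Rightarrow> gate_app \<Rightarrow> qmat" where
  "embed N g = (case g of (k, M, qs) \<Rightarrow> (\<lambda>y x.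
     if length x = N \<and> length y = N \<and> (\<forall>i<N. i \<notin> set qs \<longrightarrow> y ! i = x ! i)
     then M (map ((!) y) qs) (map ((!) x) qs) else 0))"

text \<open>A circuit [g_1, ..., g_I] denotes U_I ... U_1 (g_1 applied first).\<close>
definition circ_mat :: "nat \<Rightarrow> gate_app list \<Rightarrow> qmat" where
  "circ_mat N gs = foldl (\<lambda>acc g. mmult N (embed N g) acc) id_mat gs"

definition qubits :: "gate_app \<Rightarrow> nat set" where
  "qubits g = set (snd (snd g))"

definition is_D_power :: "nat \<Rightarrow> qmat \<Rightarrow> gate_app \<Rightarrow> bool" where
  "is_D_power d D g = (case g of (k, M, qs) \<Rightarrow> k = d \<and> (\<exists>i::int. mat_eq d M (mpowi d D i)))"

definition D_single_layer :: "nat \<Rightarrow> qmat \<Rightarrow> gate_app list \<Rightarrow> bool" where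
  "D_single_layer d D C \<longleftrightarrow>
     (\<exists>C1 L C2. C = C1 @ L @ C2 \<and>
        (\<forall>g\<in>set C1 \<union> set C2. \<not> is_D_power d D g) \<and>
        (\<forall>i<length L. \<forall>j<length L. i \<noteq> j \<longrightarrow> qubits (L ! i) \<inter> qubits (L ! j) = {}))"

end

theory Submission imports Defs begin

fun put :: "nat list \<Rightarrow> bool list \<Rightarrow> bool list \<Rightarrow> bool list" where
  "put [] v s = s"
| "put (q#qs) v s = (put qs (tl v) s)[q := hd v]"

lemma length_put[simp]: "length (put qs v s) = length s"
  by (induction qs arbitrary: v) auto

lemma put_out: "p \<notin> set qs \<Longrightarrow> put qs v s ! p = s ! p"
  by (induction qs arbitrary: v) auto

lemma put_map: "distinct qs \<Longrightarrow> set qs \<subseteq> {..<length s} \<Longrightarrow> length v = length qs \<Longrightarrow>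
   map ((!) (put qs v s)) qs = v"
proof (induction qs arbitrary: v)
  case Nil then show ?case by simp
next
  case (Cons q qs)
  then obtain b v' where v: "v = b # v'" by (cases v) auto
  have IH: "map ((!) (put qs v' s)) qs = v'" using Cons v by auto
  have "map ((!) ((put qs v' s)[q := b])) qs = map ((!) (put qs v' s)) qs"
  proof (rule map_cong)
    fix x assume "x \<in> set qs"
    then have "x \<noteq> q" using Cons.prems by auto
    then show "(put qs v' s)[q := b] ! x = put qs v' s ! x" by simp
  qed simp
  then have "map ((!) ((put qs v' s)[q := b])) qs = v'" using IH by simp
  then show ?case using Cons.prems v by simp
qed

lemma put_unique:
  assumes "distinct qs" "set qs \<subseteq> {..<length s}" "length y = length s"
    "\<forall>i<length s. i \<notin> set qs \<longrightarrow> y ! i = s ! i" "map ((!) y) qs = v"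
  shows "y = put qs v s"
proof (rule nth_equalityI)
  show "length y = length (put qs v s)" using assms by simp
  fix p assume p: "p < length y"
  show "y ! p = put qs v s ! p"
  proof (cases "p \<in> set qs")
    case True
    then obtain i where i: "i < length qs" "qs ! i = p" by (metis in_set_conv_nth)
    have "map ((!) (put qs v s)) qs = v" using assms by (intro put_map) auto
    then have "put qs v s ! p = v ! i" using i by (metis nth_map)
    moreover have "y ! p = v ! i" using assms(5) i by (metis nth_map)
    ultimately show ?thesis by simp
  next
    case False then show ?thesis using assms p put_out by auto
  qed
qed

lemma put_append: "set qs \<subseteq> {..<length x} \<Longrightarrow> put qs v (x @ a) = put qs v x @ a"
  by (induction qs arbitrary: v) (auto simp: list_update_append)

lemma finite_bits[simp]: "finite (bits k)"
proof -
  have "finite {xs. set xs \<subseteq> (UNIV::bool set) \<and> length xs = k}"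
    by (rule finite_lists_length_eq) simp
  then show ?thesis unfolding bits_def by simp
qed

definition fM :: "nat \<Rightarrow> qmat \<Rightarrow> bool list \<Rightarrow> bool list" where
  "fM k M v = (SOME w. w \<in> bits k \<and> M w v \<noteq> 0)"

fun gF :: "gate_app \<Rightarrow> bool list \<Rightarrow> bool list" where
  "gF (k, M, qs) s = put qs (fM k M (map ((!) s) qs)) s"

fun gP :: "gate_app \<Rightarrow> bool list \<Rightarrow> complex" where
  "gP (k, M, qs) s = M (fM k M (map ((!) s) qs)) (map ((!) s) qs)"

fun run :: "gate_app list \<Rightarrow> bool list \<Rightarrow> bool list \<times> complex" where
  "run [] s = (s, 1)"
| "run (g # gs) s = (fst (run gs (gF g s)), snd (run gs (gF g s)) * gP g s)"

lemma run_append: "run (as @ bs) s = (fst (run bs (fst (run as s))), snd (run bs (fst (run as s))) * snd (run as s))"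
  by (induction as arbitrary: s) auto

definition cl :: "nat \<Rightarrow> qmat \<Rightarrow> (bool list \<Rightarrow> bool list) \<Rightarrow> (bool list \<Rightarrow> complex) \<Rightarrow> bool" where
  "cl N A F p \<longleftrightarrow> (\<forall>x\<in>bits N. F x \<in> bits N \<and> (\<forall>z\<in>bits N. A z x = (if z = F x then p x else 0)))"

lemma cl_mmult: assumes "cl N A F p" "cl N B G q"
  shows "cl N (mmult N A B) (F \<circ> G) (\<lambda>x. p (G x) * q x)"
  unfolding cl_def
proof (intro ballI conjI)
  fix x assume x: "x \<in> bits N"
  then have Gx: "G x \<in> bits N" using assms(2) unfolding cl_def by blast
  then show "(F \<circ> G) x \<in> bits N" using assms(1) unfolding cl_def by auto
  fix z assume z: "z \<in> bits N"
  have "mmult N A B z x = (\<Sum>w\<in>bits N. (if w = G x then A z w * q x else 0))"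
    unfolding mmult_def using assms(2) x by (intro sum.cong) (auto simp: cl_def)
  also have "\<dots> = A z (G x) * q x" using Gx by simp
  also have "\<dots> = (if z = (F \<circ> G) x then p (G x) * q x else 0)"
    using assms(1) Gx z unfolding cl_def by auto
  finally show "mmult N A B z x = (if z = (F \<circ> G) x then p (G x) * q x else 0)" .
qed

definition good :: "nat \<Rightarrow> gate_app \<Rightarrow> bool" where
  "good N g \<longleftrightarrow> wf_app N g \<and> almost_classical (fst g) (fst (snd g))"

lemma fM_ac: assumes "almost_classical k M" "v \<in> bits k"
  shows "\<exists>f \<phi>. fM k M v = f v \<and> f v \<in> bits k \<and> M (f v) v = cis (\<phi> v) \<and>
     (\<forall>y\<in>bits k. M y v = (if y = f v then cis (\<phi> v) else 0))"
proof -
  obtain f \<phi> where f: "bij_betw f (bits k) (bits k)"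
    "\<forall>x\<in>bits k. \<forall>y\<in>bits k. M y x = (if y = f x then cis (\<phi> x) else 0)"
    using assms(1) unfolding almost_classical_def by blast
  have fv: "f v \<in> bits k" using f(1) assms(2) bij_betwE by blast
  have "fM k M v = f v" unfolding fM_def
  proof (rule some_equality)
    show "f v \<in> bits k \<and> M (f v) v \<noteq> 0" using fv f(2) assms(2) by simp
    fix w assume "w \<in> bits k \<and> M w v \<noteq> 0" then show "w = f v"
      using f(2) assms(2) by (metis)
  qed
  then show ?thesis using fv f(2) assms(2) by auto
qed

lemma gate_cl: assumes "good N g"
  shows "cl N (embed N g) (gF g) (gP g)"
proof -
  obtain k M qs where g: "g = (k, M, qs)" by (cases g) auto
  have wf: "length qs = k" "distinct qs" "set qs \<subseteq> {..<N}" and ac: "almost_classical k M"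
    using assms unfolding good_def wf_app_def g by auto
  show ?thesis unfolding cl_def
  proof (intro ballI conjI)
    fix x assume x: "x \<in> bits N"
    have v: "map ((!) x) qs \<in> bits k" using wf by (simp add: bits_def)
    obtain f \<phi> where f: "fM k M (map ((!) x) qs) = f (map ((!) x) qs)" "f (map ((!) x) qs) \<in> bits k"
      "M (f (map ((!) x) qs)) (map ((!) x) qs) = cis (\<phi> (map ((!) x) qs))"
      "\<forall>y\<in>bits k. M y (map ((!) x) qs) = (if y = f (map ((!) x) qs) then cis (\<phi> (map ((!) x) qs)) else 0)"
      using fM_ac[OF ac v] by blast
    show "gF g x \<in> bits N" using x by (simp add: g bits_def)
    fix z assume z: "z \<in> bits N"
    have lx: "length x = N" "length z = N" using x z by (auto simp: bits_def)
    have zk: "map ((!) z) qs \<in> bits k" using wf by (simp add: bits_def)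
    have eq: "((\<forall>i<N. i \<notin> set qs \<longrightarrow> z ! i = x ! i) \<and> map ((!) z) qs = f (map ((!) x) qs))
        \<longleftrightarrow> z = put qs (f (map ((!) x) qs)) x"
    proof
      assume "(\<forall>i<N. i \<notin> set qs \<longrightarrow> z ! i = x ! i) \<and> map ((!) z) qs = f (map ((!) x) qs)"
      then show "z = put qs (f (map ((!) x) qs)) x"
        using wf lx by (intro put_unique) auto
    next
      assume zz: "z = put qs (f (map ((!) x) qs)) x"
      have "map ((!) z) qs = f (map ((!) x) qs)" unfolding zz
        using wf lx f(2) by (intro put_map) (auto simp: bits_def)
      then show "(\<forall>i<N. i \<notin> set qs \<longrightarrow> z ! i = x ! i) \<and> map ((!) z) qs = f (map ((!) x) qs)"
        using zz put_out by auto
    qed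
    have "embed N g z x = (if (\<forall>i<N. i \<notin> set qs \<longrightarrow> z ! i = x ! i) then M (map ((!) z) qs) (map ((!) x) qs) else 0)"
      using lx by (simp add: g embed_def)
    also have "\<dots> = (if (\<forall>i<N. i \<notin> set qs \<longrightarrow> z ! i = x ! i) \<and> map ((!) z) qs = f (map ((!) x) qs) then cis (\<phi> (map ((!) x) qs)) else 0)"
      using f(3,4) zk by auto
    also have "\<dots> = (if z = put qs (f (map ((!) x) qs)) x then cis (\<phi> (map ((!) x) qs)) else 0)"
      using eq by simp
    also have "\<dots> = (if z = gF g x then gP g x else 0)"
      using f(1,3) by (simp add: g)
    finally show "embed N g z x = (if z = gF g x then gP g x else 0)" .
  qed
qed


lemma circ_cl_gen: assumes "\<forall>g\<in>set gs. good N g" "cl N A F p"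
  shows "cl N (foldl (\<lambda>acc g. mmult N (embed N g) acc) A gs)
     (\<lambda>x. fst (run gs (F x))) (\<lambda>x. snd (run gs (F x)) * p x)"
  using assms
proof (induction gs arbitrary: A F p)
  case Nil then show ?case by simp
next
  case (Cons g gs)
  have c1: "cl N (mmult N (embed N g) A) (gF g \<circ> F) (\<lambda>x. gP g (F x) * p x)"
    using Cons.prems by (intro cl_mmult gate_cl) auto
  have gs: "\<forall>x\<in>set gs. good N x" using Cons.prems(1) by simp
  note c2 = Cons.IH[OF gs c1]
  show ?case using c2 by (simp add: comp_def mult.assoc)
qed

lemma circ_run: assumes "\<forall>g\<in>set gs. good N g" "x \<in> bits N" "z \<in> bits N"
  shows "fst (run gs x) \<in> bits N \<and> circ_mat N gs z x = (if z = fst (run gs x) then snd (run gs x) else 0)"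
proof -
  have "cl N id_mat id (\<lambda>_. 1)" by (simp add: cl_def id_mat_def)
  from circ_cl_gen[OF assms(1) this] assms(2,3) show ?thesis
    unfolding cl_def circ_mat_def by auto
qed


lemma gate_append: assumes "set qs \<subseteq> {..<length x}"
  shows "gF (k, M, qs) (x @ a) = gF (k, M, qs) x @ a" "gP (k, M, qs) (x @ a) = gP (k, M, qs) x"
proof -
  have mm: "map ((!) (x @ a)) qs = map ((!) x) qs" using assms by (auto simp: nth_append)
  show "gF (k, M, qs) (x @ a) = gF (k, M, qs) x @ a" "gP (k, M, qs) (x @ a) = gP (k, M, qs) x"
    unfolding gF.simps gP.simps mm using assms by (auto simp: put_append)
qed

lemma fM_diag: assumes "almost_classical k M" "diagonal k M" "v \<in> bits k"
  shows "fM k M v = v" "M v v \<noteq> 0"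
proof -
  obtain f \<phi> where f: "fM k M v = f v" "f v \<in> bits k" "M (f v) v = cis (\<phi> v)"
    using fM_ac[OF assms(1,3)] by blast
  have "f v = v" using assms(2,3) f(2,3) unfolding diagonal_def by (metis cis_neq_zero)
  then show "fM k M v = v" "M v v \<noteq> 0" using f by auto
qed

lemma put_self: "distinct qs \<Longrightarrow> set qs \<subseteq> {..<length s} \<Longrightarrow> put qs (map ((!) s) qs) s = s"
  by (rule put_unique[symmetric]) auto

lemma gF_diag: assumes "good N (k, M, qs)" "diagonal k M" "s \<in> bits N"
  shows "gF (k, M, qs) s = s"
proof -
  have wf: "length qs = k" "distinct qs" "set qs \<subseteq> {..<N}" "almost_classical k M"
    using assms(1) by (auto simp: good_def wf_app_def)
  have "map ((!) s) qs \<in> bits k" using wf by (simp add: bits_def)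
  then have "fM k M (map ((!) s) qs) = map ((!) s) qs" using fM_diag wf assms by blast
  then show ?thesis using put_self wf assms(3) by (simp add: bits_def)
qed

definition adjg :: "gate_app \<Rightarrow> gate_app" where
  "adjg g = (fst g, adj (fst (snd g)), snd (snd g))"

lemma ac_adj: assumes "almost_classical k M" shows "almost_classical k (adj M)"
proof -
  obtain f \<phi> where f: "bij_betw f (bits k) (bits k)"
    "\<forall>x\<in>bits k. \<forall>y\<in>bits k. M y x = (if y = f x then cis (\<phi> x) else 0)"
    using assms unfolding almost_classical_def by blast
  let ?g = "inv_into (bits k) f"
  have g: "bij_betw ?g (bits k) (bits k)" using f(1) by (rule bij_betw_inv_into)
  have "\<forall>x\<in>bits k. \<forall>y\<in>bits k. adj M y x = (if y = ?g x then cis (- \<phi> (?g x)) else 0)"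
  proof (intro ballI)
    fix x y assume x: "x \<in> bits k" and y: "y \<in> bits k"
    have "(x = f y) \<longleftrightarrow> (y = ?g x)" using f(1) x y
      by (metis bij_betw_inv_into_left bij_betw_inv_into_right)
    then show "adj M y x = (if y = ?g x then cis (- \<phi> (?g x)) else 0)"
      using f(2) x y by (auto simp: adj_def cis_cnj)
  qed
  then show ?thesis unfolding almost_classical_def
    by (intro exI[of _ ?g] exI[of _ "\<lambda>x. - \<phi> (?g x)"]) (use g in auto)
qed

lemma good_adj: "good N g \<Longrightarrow> good N (adjg g)"
  by (cases g) (auto simp: good_def adjg_def wf_app_def ac_adj)

lemma gate_adj: assumes "good N g" "s \<in> bits N"
  shows "gF (adjg g) (gF g s) = s" "gP (adjg g) (gF g s) * gP g s = 1"
proof -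
  obtain k M qs where g: "g = (k, M, qs)" by (cases g) auto
  have wf: "length qs = k" "distinct qs" "set qs \<subseteq> {..<N}" and ac: "almost_classical k M"
    and ls: "length s = N"
    using assms unfolding good_def wf_app_def g by (auto simp: bits_def)
  define v where "v = map ((!) s) qs"
  have v: "v \<in> bits k" using wf by (simp add: bits_def v_def)
  obtain f \<phi> where f: "fM k M v = f v" "f v \<in> bits k" "M (f v) v = cis (\<phi> v)"
      "\<forall>y\<in>bits k. M y v = (if y = f v then cis (\<phi> v) else 0)"
    using fM_ac[OF ac v] by blast
  have gs: "gF g s = put qs (f v) s" using f(1) by (simp add: g v_def)
  have mg: "map ((!) (gF g s)) qs = f v" unfolding gs using wf ls f(2)
    by (intro put_map) (auto simp: bits_def)
  have fa: "fM k (adj M) (f v) = v" unfolding fM_def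
  proof (rule some_equality)
    show "v \<in> bits k \<and> adj M v (f v) \<noteq> 0" using v f(3) by (simp add: adj_def)
    fix w assume w: "w \<in> bits k \<and> adj M w (f v) \<noteq> 0"
    then have "M (f v) w \<noteq> 0" by (simp add: adj_def)
    moreover obtain h \<psi> where "bij_betw h (bits k) (bits k)"
      "\<forall>x\<in>bits k. \<forall>y\<in>bits k. M y x = (if y = h x then cis (\<psi> x) else 0)"
      using ac unfolding almost_classical_def by blast
    ultimately show "w = v" using w v f(2,3)
      by (metis bij_betw_imp_inj_on cis_neq_zero inj_on_contraD)
  qed
  obtain t where t: "t = gF g s" by simp
  have "gF (adjg g) t = put qs (fM k (adj M) (map ((!) t) qs)) t"
    by (simp add: adjg_def g)
  then have "gF (adjg g) (gF g s) = put qs v (gF g s)"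
    using mg fa t by simp
  also have "\<dots> = s"
  proof (rule put_unique[symmetric])
    show "distinct qs" "set qs \<subseteq> {..<length (gF g s)}" "length s = length (gF g s)"
      using wf ls by (auto simp: gs)
    show "\<forall>i<length (gF g s). i \<notin> set qs \<longrightarrow> s ! i = gF g s ! i"
      by (auto simp: gs put_out)
    show "map ((!) s) qs = v" by (simp add: v_def)
  qed
  finally show "gF (adjg g) (gF g s) = s" .
  have "gP (adjg g) (gF g s) = cnj (cis (\<phi> v))"
    using mg fa f(3) by (simp add: adjg_def g adj_def del: gF.simps)
  then show "gP (adjg g) (gF g s) * gP g s = 1"
    using f(1,3) by (simp add: g v_def[symmetric] cis_cnj cis_mult del: gF.simps)
qed


lemma length_gF[simp]: "length (gF g s) = length s"
  by (cases g) auto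

lemma length_run[simp]: "length (fst (run gs s)) = length s"
  by (induction gs arbitrary: s) auto

lemma run_inv: assumes "\<forall>g\<in>set gs. good N g" "y \<in> bits N"
  shows "fst (run (rev (map adjg gs)) (fst (run gs y))) = y \<and>
         snd (run (rev (map adjg gs)) (fst (run gs y))) * snd (run gs y) = 1"
  using assms
proof (induction gs arbitrary: y)
  case Nil then show ?case by simp
next
  case (Cons g gs)
  let ?y = "gF g y"
  have gy: "?y \<in> bits N" using Cons.prems(2) by (simp add: bits_def)
  have IH: "fst (run (rev (map adjg gs)) (fst (run gs ?y))) = ?y \<and>
         snd (run (rev (map adjg gs)) (fst (run gs ?y))) * snd (run gs ?y) = 1"
    using Cons.IH Cons.prems(1) gy by auto
  have a: "gF (adjg g) ?y = y" "gP (adjg g) ?y * gP g y = 1"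
    using gate_adj[of N g y] Cons.prems by simp_all
  have r: "run (rev (map adjg (g # gs))) (fst (run (g # gs) y)) =
     (fst (run [adjg g] (fst (run (rev (map adjg gs)) (fst (run gs ?y))))),
      snd (run [adjg g] (fst (run (rev (map adjg gs)) (fst (run gs ?y))))) *
      snd (run (rev (map adjg gs)) (fst (run gs ?y))))"
    by (simp add: run_append)
  have p: "snd (run (g # gs) y) = snd (run gs ?y) * gP g y" by simp
  show ?case unfolding r p using IH a
    by (simp add: algebra_simps)
qed

lemma diag_mpow: "diagonal k A \<Longrightarrow> diagonal k (mpow k A j)"
proof (induction j)
  case 0 then show ?case by (simp add: diagonal_def id_mat_def)
next
  case (Suc j)
  show ?case unfolding diagonal_def
  proof (intro ballI impI)
    fix x y assume x: "x \<in> bits k" and y: "y \<in> bits k" and xy: "x \<noteq> y"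
    have dj: "diagonal k (mpow k A j)" using Suc by blast
    have "\<forall>z\<in>bits k. A y z * mpow k A j z x = 0"
    proof
      fix z assume z: "z \<in> bits k"
      show "A y z * mpow k A j z x = 0"
      proof (cases "z = y")
        case True
        then have "mpow k A j z x = 0" using dj xy x z unfolding diagonal_def by auto
        then show ?thesis by simp
      next
        case False
        then have "A y z = 0" using Suc.prems y z unfolding diagonal_def by auto
        then show ?thesis by simp
      qed
    qed
    then show "mpow k A (Suc j) y x = 0" unfolding mpow.simps mmult_def by (rule sum.neutral)
  qed
qed

lemma diag_adj: "diagonal k A \<Longrightarrow> diagonal k (adj A)"
  unfolding diagonal_def adj_def by auto

lemma diag_adj_rev: "diagonal k (adj A) \<Longrightarrow> diagonal k A"
  unfolding diagonal_def adj_def by (metis complex_cnj_zero_iff)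

lemma diag_mat_eq: "mat_eq k M A \<Longrightarrow> diagonal k A \<Longrightarrow> diagonal k M"
  unfolding diagonal_def mat_eq_def by auto

lemma Dpow_diag: assumes "diagonal d D" "is_D_power d D (k, M, qs)"
  shows "k = d \<and> diagonal d M"
proof -
  obtain i where k: "k = d" and i: "mat_eq d M (mpowi d D i)"
    using assms(2) unfolding is_D_power_def by auto
  have "diagonal d (mpowi d D i)"
    using assms(1) diag_mpow diag_adj unfolding mpowi_def by simp
  then show ?thesis using k i diag_mat_eq by blast
qed

lemma diagD: "diagonal k M \<Longrightarrow> x \<in> bits k \<Longrightarrow> y \<in> bits k \<Longrightarrow> x \<noteq> y \<Longrightarrow> M y x = 0"
  unfolding diagonal_def by blast

lemma mat_eqD: "mat_eq k A B \<Longrightarrow> x \<in> bits k \<Longrightarrow> y \<in> bits k \<Longrightarrow> A y x = B y x"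
  unfolding mat_eq_def by blast

lemma cnot_not_diag: assumes "mat_eq 2 Mc cnot" shows "\<not> diagonal 2 Mc"
proof
  assume d: "diagonal 2 Mc"
  have b: "[True, True] \<in> bits 2" "[True, False] \<in> bits 2" by (auto simp: bits_def)
  have "Mc [True, False] [True, True] = 0" by (rule diagD[OF d b]) simp
  moreover have "Mc [True, False] [True, True] = cnot [True, False] [True, True]"
    by (rule mat_eqD[OF assms b])
  moreover have "cnot [True, False] [True, True] = 1" by (simp add: cnot_def)
  ultimately show False by simp
qed

lemma cnot_gate: assumes "mat_eq 2 Mc cnot" "i \<noteq> t" "i < length s" "t < length s"
  shows "gF (2, Mc, [i, t]) s = s[t := (s ! i \<noteq> s ! t)]" "gP (2, Mc, [i, t]) s = 1"
proof -
  let ?v = "[s ! i, s ! t]"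
  have v: "?v \<in> bits 2" by (simp add: bits_def)
  have fm: "fM 2 Mc ?v = [s ! i, s ! i \<noteq> s ! t]" unfolding fM_def
  proof (rule some_equality)
    have w0: "[s ! i, s ! i \<noteq> s ! t] \<in> bits 2" by (simp add: bits_def)
    have "Mc [s ! i, s ! i \<noteq> s ! t] ?v = cnot [s ! i, s ! i \<noteq> s ! t] ?v"
      by (rule mat_eqD[OF assms(1) v w0])
    then show "[s ! i, s ! i \<noteq> s ! t] \<in> bits 2 \<and> Mc [s ! i, s ! i \<noteq> s ! t] ?v \<noteq> 0"
      by (simp add: cnot_def bits_def)
    fix w assume w: "w \<in> bits 2 \<and> Mc w ?v \<noteq> 0"
    then have "cnot w ?v \<noteq> 0" using mat_eqD[OF assms(1) v] w by simp
    then show "w = [s ! i, s ! i \<noteq> s ! t]" by (simp add: cnot_def split: if_splits)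
  qed
  have w0: "[s ! i, s ! i \<noteq> s ! t] \<in> bits 2" by (simp add: bits_def)
  have "Mc [s ! i, s ! i \<noteq> s ! t] ?v = cnot [s ! i, s ! i \<noteq> s ! t] ?v"
    by (rule mat_eqD[OF assms(1) v w0])
  then show "gP (2, Mc, [i, t]) s = 1" using fm by (simp add: cnot_def)
  show "gF (2, Mc, [i, t]) s = s[t := (s ! i \<noteq> s ! t)]"
  proof -
    have "gF (2, Mc, [i, t]) s = (s[t := (s ! i \<noteq> s ! t)])[i := s ! i]" using fm by simp
    also have "\<dots> = (s[t := (s ! i \<noteq> s ! t)])[i := (s[t := (s ! i \<noteq> s ! t)]) ! i]"
      using assms(2,3) by simp
    also have "\<dots> = s[t := (s ! i \<noteq> s ! t)]" by (rule list_update_id)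
    finally show ?thesis .
  qed
qed


definition special :: "nat \<Rightarrow> gate_app \<Rightarrow> bool" where
  "special d g \<longleftrightarrow> fst g = d \<and> diagonal d (fst (snd g))"

lemma good_mono: "good n g \<Longrightarrow> n \<le> N \<Longrightarrow> good N g"
  by (cases g) (auto simp: good_def wf_app_def)

locale constr =
  fixes n d :: nat and U :: "gate_app list" and Mc :: qmat
  assumes goodU: "\<forall>g\<in>set U. good n g"
    and Mc: "mat_eq 2 Mc cnot" and acMc: "almost_classical 2 Mc"
begin

abbreviation "L \<equiv> length U"
definition m :: nat where "m = n * Suc L"
definition cg :: "nat \<Rightarrow> nat \<Rightarrow> gate_app" where "cg j i = (2, Mc, [i, n + j * n + i])"
definition copy :: "nat \<Rightarrow> gate_app list" where "copy j = map (cg j) [0..<n]"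
definition pc :: "nat \<Rightarrow> gate_app list" where
  "pc j = (if special d (U ! j) then copy j else [U ! j])"
definition P :: "gate_app list" where "P = concat (map pc [0..<L])"
definition lg :: "nat \<Rightarrow> gate_app" where
  "lg j = (fst (U ! j), fst (snd (U ! j)), map (\<lambda>q. n + j * n + q) (snd (snd (U ! j))))"
definition Lay :: "gate_app list" where "Lay = map lg (filter (\<lambda>j. special d (U ! j)) [0..<L])"
definition Unod :: "gate_app list" where "Unod = map ((!) U) (filter (\<lambda>j. \<not> special d (U ! j)) [0..<L])"
definition C2 :: "gate_app list" where "C2 = copy L @ rev (map adjg P) @ Unod @ copy L"
definition C :: "gate_app list" where "C = P @ Lay @ C2"

definition s :: "nat \<Rightarrow> bool list \<Rightarrow> bool list" where "s j x = fst (run (take j U) x)"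
definition ph :: "nat \<Rightarrow> bool list \<Rightarrow> complex" where "ph j x = gP (U ! j) (s j x)"

lemma goodUj: "j < L \<Longrightarrow> good n (U ! j)" using goodU by auto

lemma qs_lt: "j < L \<Longrightarrow> set (snd (snd (U ! j))) \<subseteq> {..<n}"
  using goodUj[of j] by (cases "U ! j") (auto simp: good_def wf_app_def)

lemma len_s[simp]: "length (s j x) = length x" by (simp add: s_def)

lemma s_bits: "x \<in> bits n \<Longrightarrow> s j x \<in> bits n" by (simp add: bits_def)

lemma s_Suc: "j < L \<Longrightarrow> s (Suc j) x = gF (U ! j) (s j x)"
  by (simp add: s_def take_Suc_conv_app_nth run_append)

lemma run_take: "K \<le> L \<Longrightarrow> snd (run (take K U) x) = (\<Prod>j<K. ph j x)"
proof (induction K)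
  case 0 then show ?case by simp
next
  case (Suc K)
  then show ?case
    by (simp add: take_Suc_conv_app_nth run_append ph_def s_def mult.commute)
qed

lemma s_special: "j < L \<Longrightarrow> special d (U ! j) \<Longrightarrow> x \<in> bits n \<Longrightarrow> s (Suc j) x = s j x"
  using s_Suc[of j x] gF_diag[of n _ _ _ "s j x"] goodUj[of j] s_bits[of x j]
  by (cases "U ! j") (auto simp: special_def)

lemma good_cg: "j \<le> L \<Longrightarrow> i < n \<Longrightarrow> good (n + m) (cg j i)"
proof -
  assume a: "j \<le> L" "i < n"
  have "j * n + i < n * Suc L"
    using a by (metis add.commute add_mono_thms_linordered_field(4) mult.commute mult_Suc_right mult_le_mono2)
  then show ?thesis using a acMc by (auto simp: good_def wf_app_def cg_def m_def)
qed

lemma copy_gen: assumes "x \<in> bits n" "length a = m" "j \<le> L" "k \<le> n"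
  shows "run (map (cg j) [0..<k]) (x @ a) =
    (x @ map (\<lambda>p. if j * n \<le> p \<and> p < j * n + k then (a ! p \<noteq> x ! (p - j * n)) else a ! p) [0..<length a], 1)"
  using assms(4)
proof (induction k)
  case 0
  show ?case by (simp, intro nth_equalityI) auto
next
  case (Suc k)
  let ?a = "map (\<lambda>p. if j * n \<le> p \<and> p < j * n + k then (a ! p \<noteq> x ! (p - j * n)) else a ! p) [0..<length a]"
  have lx: "length x = n" using assms(1) by (simp add: bits_def)
  have jk: "j * n + k < m"
  proof -
    have "j * n + k < j * n + n" using Suc.prems by simp
    also have "\<dots> \<le> L * n + n" using assms(3) by simp
    finally show ?thesis by (simp add: m_def algebra_simps)
  qed
  have r: "run (map (cg j) [0..<Suc k]) (x @ a) =
     (fst (run [cg j k] (x @ ?a)), snd (run [cg j k] (x @ ?a)))"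
    using Suc by (simp add: run_append)
  have g: "gF (cg j k) (x @ ?a) = (x @ ?a)[n + j * n + k := ((x @ ?a) ! k \<noteq> (x @ ?a) ! (n + j * n + k))]"
          "gP (cg j k) (x @ ?a) = 1"
  proof -
    have c: "k \<noteq> n + j * n + k" "k < length (x @ ?a)" "n + j * n + k < length (x @ ?a)"
      using Suc.prems jk lx assms(2) by simp_all
    show "gF (cg j k) (x @ ?a) = (x @ ?a)[n + j * n + k := ((x @ ?a) ! k \<noteq> (x @ ?a) ! (n + j * n + k))]"
      unfolding cg_def by (rule cnot_gate(1)[OF Mc c])
    show "gP (cg j k) (x @ ?a) = 1"
      unfolding cg_def by (rule cnot_gate(2)[OF Mc c])
  qed
  have e: "(x @ ?a)[n + j * n + k := ((x @ ?a) ! k \<noteq> (x @ ?a) ! (n + j * n + k))] =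
    x @ map (\<lambda>p. if j * n \<le> p \<and> p < j * n + Suc k then (a ! p \<noteq> x ! (p - j * n)) else a ! p) [0..<length a]"
  proof -
    have k: "(x @ ?a) ! k = x ! k" using Suc.prems lx by (simp add: nth_append)
    have t: "(x @ ?a) ! (n + j * n + k) = a ! (j * n + k)" using lx jk assms(2) by (simp add: nth_append)
    have "(x @ ?a)[n + j * n + k := (x ! k \<noteq> a ! (j * n + k))] = x @ ?a[j * n + k := (x ! k \<noteq> a ! (j * n + k))]"
      using lx by (simp add: list_update_append)
    also have "?a[j * n + k := (x ! k \<noteq> a ! (j * n + k))] =
      map (\<lambda>p. if j * n \<le> p \<and> p < j * n + Suc k then (a ! p \<noteq> x ! (p - j * n)) else a ! p) [0..<length a]"
    proof (rule nth_equalityI)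
      fix i assume i: "i < length (?a[j * n + k := (x ! k \<noteq> a ! (j * n + k))])"
      show "?a[j * n + k := (x ! k \<noteq> a ! (j * n + k))] ! i =
        map (\<lambda>p. if j * n \<le> p \<and> p < j * n + Suc k then (a ! p \<noteq> x ! (p - j * n)) else a ! p) [0..<length a] ! i"
      proof (cases "i = j * n + k")
        case True
        then show ?thesis using i by auto
      next
        case False
        have c: "(j * n \<le> i \<and> i < j * n + k) = (j * n \<le> i \<and> i < j * n + Suc k)" using False by auto
        show ?thesis using i False by (simp only: nth_list_update_neq length_list_update length_map
           length_upt nth_map_upt c) simp
      qed
    qed simp
    finally show ?thesis using k t by simp
  qed
  show ?case using r g e by simp
qed

definition xorb :: "nat \<Rightarrow> bool list \<Rightarrow> bool list \<Rightarrow> bool list" where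
  "xorb j x a = map (\<lambda>p. if p div n = j then (a ! p \<noteq> x ! (p mod n)) else a ! p) [0..<length a]"

lemma div_range: assumes "n \<noteq> 0" shows "(j * n \<le> p \<and> p < j * n + n) \<longleftrightarrow> p div (n::nat) = j"
proof
  assume "j * n \<le> p \<and> p < j * n + n"
  then show "p div n = j" by (intro div_nat_eqI) (auto simp: algebra_simps)
next
  assume h: "p div n = j"
  have "p div n * n \<le> p" by simp
  moreover have "p < n + p div n * n" using assms dividend_less_div_times by simp
  ultimately show "j * n \<le> p \<and> p < j * n + n" using h by simp
qed

lemma copy_run: assumes "x \<in> bits n" "length a = m" "j \<le> L"
  shows "run (copy j) (x @ a) = (x @ xorb j x a, 1)"
proof (cases "n = 0")
  case True
  have "m = 0" unfolding m_def using True by simp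
  then have "a = []" using assms(2) by simp
  then show ?thesis unfolding copy_def xorb_def using True by simp
next
  case False
  have "map (\<lambda>p. if j * n \<le> p \<and> p < j * n + n then (a ! p \<noteq> x ! (p - j * n)) else a ! p) [0..<length a]
     = xorb j x a" unfolding xorb_def
  proof (rule map_cong[OF refl])
    fix p
    have "(j * n \<le> p \<and> p < j * n + n) \<longleftrightarrow> p div n = j" using False
      by (rule div_range)
    moreover have "p div n = j \<Longrightarrow> p - j * n = p mod n" by (simp add: minus_div_mult_eq_mod[symmetric])
    ultimately show "(if j * n \<le> p \<and> p < j * n + n then (a ! p \<noteq> x ! (p - j * n)) else a ! p) =
         (if p div n = j then (a ! p \<noteq> x ! (p mod n)) else a ! p)" by auto
  qed
  then show ?thesis using copy_gen[OF assms order_refl] by (simp add: copy_def)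
qed


definition ancst :: "nat \<Rightarrow> bool list \<Rightarrow> bool list \<Rightarrow> bool list" where
  "ancst K x a = map (\<lambda>p. if p div n < K \<and> special d (U ! (p div n)) then (a ! p \<noteq> s (p div n) x ! (p mod n)) else a ! p) [0..<length a]"

lemma xorb_map: "xorb j y (map f [0..<l]) = map (\<lambda>p. if p div n = j then (f p \<noteq> y ! (p mod n)) else f p) [0..<l]"
  by (auto simp: xorb_def intro!: map_cong)

lemma length_ancst[simp]: "length (ancst K x a) = length a" by (simp add: ancst_def)

lemma gate_run1: "run [g] y = (gF g y, gP g y)" by simp

lemma P_run: assumes "x \<in> bits n" "length a = m" "K \<le> L"
  shows "run (concat (map pc [0..<K])) (x @ a) =
    (s K x @ ancst K x a, \<Prod>j<K. if special d (U ! j) then 1 else ph j x)"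
  using assms(3)
proof (induction K)
  case 0
  have "ancst 0 x a = a" by (simp add: ancst_def, intro nth_equalityI) auto
  then show ?case by (simp add: s_def)
next
  case (Suc K)
  then have K: "K < L" by simp
  have IH: "run (concat (map pc [0..<K])) (x @ a) =
    (s K x @ ancst K x a, \<Prod>j<K. if special d (U ! j) then 1 else ph j x)" using Suc by simp
  have r: "run (concat (map pc [0..<Suc K])) (x @ a) =
     (fst (run (pc K) (s K x @ ancst K x a)),
      snd (run (pc K) (s K x @ ancst K x a)) * (\<Prod>j<K. if special d (U ! j) then 1 else ph j x))"
    by (simp add: run_append IH)
  have sK: "s K x \<in> bits n" using assms(1) by (rule s_bits)
  show ?case
  proof (cases "special d (U ! K)")
    case True
    have c: "run (pc K) (s K x @ ancst K x a) = (s K x @ xorb K (s K x) (ancst K x a), 1)"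
      unfolding pc_def using True copy_run[OF sK _ ] K assms(2) by simp
    have e: "xorb K (s K x) (ancst K x a) = ancst (Suc K) x a"
      unfolding ancst_def xorb_map
    proof (rule map_cong[OF refl])
      fix p
      consider "p div n < K" | "p div n = K" | "p div n > K" by linarith
      then show "(if p div n = K then ((if p div n < K \<and> special d (U ! (p div n)) then (a ! p \<noteq> s (p div n) x ! (p mod n)) else a ! p) \<noteq> s K x ! (p mod n))
          else (if p div n < K \<and> special d (U ! (p div n)) then (a ! p \<noteq> s (p div n) x ! (p mod n)) else a ! p)) =
         (if p div n < Suc K \<and> special d (U ! (p div n)) then (a ! p \<noteq> s (p div n) x ! (p mod n)) else a ! p)"
        using True by cases auto
    qed
    show ?thesis using r c e s_special[OF K True assms(1)] True by simp
  next
    case False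
    obtain k M qs where g: "U ! K = (k, M, qs)" by (cases "U ! K") auto
    have q: "set qs \<subseteq> {..<length (s K x)}" using qs_lt[OF K] g sK by (simp add: bits_def)
    have c: "run (pc K) (s K x @ ancst K x a) = (s (Suc K) x @ ancst K x a, ph K x)"
      unfolding pc_def using False gate_append[OF q] s_Suc[OF K] by (simp add: ph_def g)
    have e: "ancst K x a = ancst (Suc K) x a"
      unfolding ancst_def
    proof (rule map_cong[OF refl])
      fix p
      have "(p div n < K \<and> special d (U ! (p div n))) = (p div n < Suc K \<and> special d (U ! (p div n)))"
        using False less_Suc_eq by auto
      then show "(if p div n < K \<and> special d (U ! (p div n)) then (a ! p \<noteq> s (p div n) x ! (p mod n)) else a ! p) =
         (if p div n < Suc K \<and> special d (U ! (p div n)) then (a ! p \<noteq> s (p div n) x ! (p mod n)) else a ! p)"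
        by simp
    qed
    show ?thesis using r c e False by (simp add: mult.commute)
  qed
qed

lemma good_lg: assumes "j < L" shows "good (n + m) (lg j)"
proof -
  obtain k M qs where g: "U ! j = (k, M, qs)" by (cases "U ! j") auto
  have gd: "length qs = k" "distinct qs" "set qs \<subseteq> {..<n}" "almost_classical k M"
    using goodUj[OF assms] g by (auto simp: good_def wf_app_def)
  have "\<forall>q\<in>set qs. n + j * n + q < n + m"
  proof
    fix q assume "q \<in> set qs"
    then have "q < n" using gd by auto
    then have "j * n + q < j * n + n" by simp
    also have "\<dots> \<le> L * n + n" using assms by simp
    finally show "n + j * n + q < n + m" by (simp add: m_def algebra_simps)
  qed
  then show ?thesis using gd by (auto simp: good_def wf_app_def lg_def g distinct_map inj_on_def)
qed

lemma lg_gP: assumes "j < L" "length w = n" "\<forall>i<n. b ! (j * n + i) = s j x ! i" "length b = m"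
  shows "gP (lg j) (w @ b) = ph j x"
proof -
  obtain k M qs where g: "U ! j = (k, M, qs)" by (cases "U ! j") auto
  have q: "set qs \<subseteq> {..<n}" using qs_lt[OF assms(1)] g by simp
  have mm: "map ((!) (w @ b)) (map (\<lambda>q. n + j * n + q) qs) = map ((!) (s j x)) qs"
    using q assms(2,3) by (auto simp: nth_append)
  have "gP (lg j) (w @ b) = M (fM k M (map ((!) (w @ b)) (map (\<lambda>q. n + j * n + q) qs)))
      (map ((!) (w @ b)) (map (\<lambda>q. n + j * n + q) qs))"
    by (simp only: lg_def g fst_conv snd_conv gP.simps)
  also have "\<dots> = gP (U ! j) (s j x)" unfolding mm g by simp
  finally show ?thesis by (simp add: ph_def)
qed

lemma Lay_run: assumes "x \<in> bits n" "length w = n" "length b = m"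
    "\<forall>j<L. special d (U ! j) \<longrightarrow> (\<forall>i<n. b ! (j * n + i) = s j x ! i)" "K \<le> L"
  shows "run (map lg (filter (\<lambda>j. special d (U ! j)) [0..<K])) (w @ b) =
    (w @ b, \<Prod>j<K. if special d (U ! j) then ph j x else 1)"
  using assms(5)
proof (induction K)
  case 0 then show ?case by simp
next
  case (Suc K)
  then have K: "K < L" by simp
  have IH: "run (map lg (filter (\<lambda>j. special d (U ! j)) [0..<K])) (w @ b) =
    (w @ b, \<Prod>j<K. if special d (U ! j) then ph j x else 1)" using Suc by simp
  show ?case
  proof (cases "special d (U ! K)")
    case True
    obtain k M qs where g: "U ! K = (k, M, qs)" by (cases "U ! K") auto
    have gl: "good (n + m) (k, M, map (\<lambda>q. n + K * n + q) qs)" using good_lg[OF K] by (simp add: lg_def g)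
    have dg: "diagonal k M" using True g by (simp add: special_def)
    have wb: "w @ b \<in> bits (n + m)" using assms by (simp add: bits_def)
    have f: "gF (lg K) (w @ b) = w @ b" using gF_diag[OF gl dg wb] by (simp add: lg_def g)
    have p: "gP (lg K) (w @ b) = ph K x" using lg_gP[OF K assms(2)] assms(3,4) K True by simp
    show ?thesis using True IH f p by (simp add: run_append mult.commute)
  next
    case False
    then show ?thesis using IH by simp
  qed
qed

lemma Unod_run: assumes "x \<in> bits n" "K \<le> L"
  shows "run (map ((!) U) (filter (\<lambda>j. \<not> special d (U ! j)) [0..<K])) (x @ b) =
    (s K x @ b, \<Prod>j<K. if special d (U ! j) then 1 else ph j x)"
  using assms(2)
proof (induction K)
  case 0 then show ?case by (simp add: s_def)
next
  case (Suc K)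
  then have K: "K < L" by simp
  have IH: "run (map ((!) U) (filter (\<lambda>j. \<not> special d (U ! j)) [0..<K])) (x @ b) =
    (s K x @ b, \<Prod>j<K. if special d (U ! j) then 1 else ph j x)" using Suc by simp
  have sK: "s K x \<in> bits n" using assms(1) by (rule s_bits)
  show ?case
  proof (cases "special d (U ! K)")
    case True
    then show ?thesis using IH s_special[OF K True assms(1)] by simp
  next
    case False
    obtain k M qs where g: "U ! K = (k, M, qs)" by (cases "U ! K") auto
    have q: "set qs \<subseteq> {..<length (s K x)}" using qs_lt[OF K] g sK by (simp add: bits_def)
    have "run [U ! K] (s K x @ b) = (s (Suc K) x @ b, ph K x)"
      using gate_append[OF q] s_Suc[OF K] by (simp add: ph_def g)
    then show ?thesis using False IH by (simp add: run_append mult.commute)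
  qed
qed


lemma ancst_zero_block: assumes "j < L" "special d (U ! j)" "i < n"
  shows "ancst L x (replicate m False) ! (j * n + i) = s j x ! i"
proof -
  have lt: "j * n + i < m"
  proof -
    have "j * n + i < j * n + n" using assms by simp
    also have "\<dots> \<le> L * n + n" using assms by simp
    finally show ?thesis by (simp add: m_def algebra_simps)
  qed
  have dv: "(j * n + i) div n = j" "(j * n + i) mod n = i" using assms(3) by auto
  show ?thesis using lt dv assms by (simp add: ancst_def)
qed

lemma eqA: "xorb L y (ancst L x (replicate m False)) = ancst L x (xorb L y (replicate m False))"
proof (rule nth_equalityI)
  show "length (xorb L y (ancst L x (replicate m False))) = length (ancst L x (xorb L y (replicate m False)))"
    by (simp add: ancst_def xorb_def)
  fix p assume "p < length (xorb L y (ancst L x (replicate m False)))"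
  then have p: "p < m" by (simp add: ancst_def xorb_def)
  consider "p div n < L" | "p div n = L" | "p div n > L" by linarith
  then show "xorb L y (ancst L x (replicate m False)) ! p = ancst L x (xorb L y (replicate m False)) ! p"
    using p by cases (auto simp: ancst_def xorb_def)
qed

lemma xorb_twice: "xorb L y (xorb L y (replicate m False)) = replicate m False"
  unfolding xorb_def by (auto intro!: nth_equalityI)

lemma C_run: assumes x: "x \<in> bits n"
  shows "run C (x @ replicate m False) = (s L x @ replicate m False, \<Prod>j<L. ph j x)"
proof -
  define z0 where "z0 = replicate m False"
  define sL where "sL = s L x"
  define A1 where "A1 = ancst L x z0"
  define B where "B = xorb L sL z0"
  define pP where "pP = (\<Prod>j<L. if special d (U ! j) then 1 else ph j x)"
  define pLay where "pLay = (\<Prod>j<L. if special d (U ! j) then ph j x else 1)"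
  have lz: "length z0 = m" by (simp add: z0_def)
  have lB: "length B = m" by (simp add: B_def xorb_def lz)
  have sLb: "sL \<in> bits n" unfolding sL_def using x by (rule s_bits)
  have lsL: "length sL = n" using sLb by (simp add: bits_def)
  have P1: "run P (x @ z0) = (sL @ A1, pP)"
    unfolding P_def A1_def sL_def pP_def using P_run[OF x lz order_refl] .
  have blk: "\<forall>j<L. special d (U ! j) \<longrightarrow> (\<forall>i<n. A1 ! (j * n + i) = s j x ! i)"
    unfolding A1_def z0_def using ancst_zero_block by blast
  have Lay1: "run Lay (sL @ A1) = (sL @ A1, pLay)"
    unfolding Lay_def pLay_def using Lay_run[OF x lsL _ blk order_refl] by (simp add: A1_def lz)
  have c1: "run (copy L) (sL @ A1) = (sL @ ancst L x B, 1)"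
    using copy_run[OF sLb _ order_refl] eqA by (simp add: A1_def B_def z0_def)
  have PB: "run P (x @ B) = (sL @ ancst L x B, pP)"
    unfolding P_def sL_def pP_def using P_run[OF x lB order_refl] .
  have gP: "\<forall>g\<in>set P. good (n + m) g"
  proof
    fix g assume "g \<in> set P"
    then obtain j where j: "j < L" "g \<in> set (pc j)" by (auto simp: P_def)
    show "good (n + m) g"
    proof (cases "special d (U ! j)")
      case True
      then show ?thesis using j good_cg by (auto simp: pc_def copy_def)
    next
      case False
      then have "g = U ! j" using j by (simp add: pc_def)
      then show ?thesis using goodUj[OF j(1)] good_mono[of n "U ! j" "n + m"] by simp
    qed
  qed
  have xB: "x @ B \<in> bits (n + m)" using x lB by (simp add: bits_def)
  obtain q where inv: "run (rev (map adjg P)) (sL @ ancst L x B) = (x @ B, q)" "q * pP = 1"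
    using run_inv[OF gP xB] PB by (metis prod.collapse fst_conv snd_conv)
  have U1: "run Unod (x @ B) = (sL @ B, pP)"
    unfolding Unod_def sL_def pP_def using Unod_run[OF x order_refl] .
  have c2: "run (copy L) (sL @ B) = (sL @ z0, 1)"
    using copy_run[OF sLb lB order_refl] xorb_twice by (simp add: B_def z0_def)
  have "run C (x @ z0) = (sL @ z0, 1 * pP * q * 1 * pLay * pP)"
    unfolding C_def C2_def
    by (simp add: run_append P1 Lay1 c1 inv U1 c2 mult.assoc)
  also have "1 * pP * q * 1 * pLay * pP = pP * pLay"
    using inv(2) by (simp add: algebra_simps)
  also have "pP * pLay = (\<Prod>j<L. ph j x)"
    unfolding pP_def pLay_def prod.distrib[symmetric] by (rule prod.cong) auto
  finally show ?thesis by (simp add: z0_def sL_def)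
qed


lemma good_P: "\<forall>g\<in>set P. good (n + m) g"
proof
  fix g assume "g \<in> set P"
  then obtain j where j: "j < L" "g \<in> set (pc j)" by (auto simp: P_def)
  show "good (n + m) g"
  proof (cases "special d (U ! j)")
    case True
    then show ?thesis using j good_cg by (auto simp: pc_def copy_def)
  next
    case False
    then have "g = U ! j" using j by (simp add: pc_def)
    then show ?thesis using goodUj[OF j(1)] good_mono[of n "U ! j" "n + m"] by simp
  qed
qed

lemma good_C: "\<forall>g\<in>set C. good (n + m) g"
proof
  fix g assume g: "g \<in> set C"
  have gc: "\<forall>g\<in>set (copy L). good (n + m) g" using good_cg by (auto simp: copy_def)
  have gl: "\<forall>g\<in>set Lay. good (n + m) g" using good_lg by (auto simp: Lay_def)
  have gi: "\<forall>g\<in>set (rev (map adjg P)). good (n + m) g" using good_P good_adj by auto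
  have gu: "\<forall>g\<in>set Unod. good (n + m) g"
  proof
    fix g assume "g \<in> set Unod"
    then obtain j where "j < L" "g = U ! j" by (auto simp: Unod_def)
    then show "good (n + m) g" using goodUj good_mono[of n "U ! j" "n + m"] by simp
  qed
  show "good (n + m) g" using g good_P gc gl gi gu by (auto simp: C_def C2_def)
qed

definition S :: "(nat \<times> qmat) set" where
  "S = {(fst g, fst (snd g)) | g. g \<in> set U} \<union> {(2, Mc)}"

lemma orig_U: "j < L \<Longrightarrow> (fst (U ! j), fst (snd (U ! j))) \<in> S"
  unfolding S_def using nth_mem[of j U] by blast

lemma orig_P: "\<forall>g\<in>set P. (fst g, fst (snd g)) \<in> S"
proof
  fix g assume "g \<in> set P"
  then obtain j where j: "j < L" "g \<in> set (pc j)" by (auto simp: P_def)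
  show "(fst g, fst (snd g)) \<in> S"
  proof (cases "special d (U ! j)")
    case True
    then show ?thesis using j by (auto simp: pc_def copy_def cg_def S_def)
  next
    case False
    then have "g = U ! j" using j by (simp add: pc_def)
    then show ?thesis using orig_U[OF j(1)] by simp
  qed
qed

lemma orig_C: "\<forall>g\<in>set C. (fst g, fst (snd g)) \<in> S \<or> (\<exists>M'. (fst g, M') \<in> S \<and> fst (snd g) = adj M')"
proof
  fix g assume g: "g \<in> set C"
  have gc: "\<forall>g\<in>set (copy L). (fst g, fst (snd g)) \<in> S" by (auto simp: copy_def cg_def S_def)
  have gl: "\<forall>g\<in>set Lay. (fst g, fst (snd g)) \<in> S"
  proof
    fix g assume "g \<in> set Lay"
    then obtain j where "j < L" "g = lg j" by (auto simp: Lay_def)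
    then show "(fst g, fst (snd g)) \<in> S" using orig_U by (simp add: lg_def)
  qed
  have gu: "\<forall>g\<in>set Unod. (fst g, fst (snd g)) \<in> S"
  proof
    fix g assume "g \<in> set Unod"
    then obtain j where "j < L" "g = U ! j" by (auto simp: Unod_def)
    then show "(fst g, fst (snd g)) \<in> S" using orig_U by simp
  qed
  have gi: "\<forall>g\<in>set (rev (map adjg P)). \<exists>M'. (fst g, M') \<in> S \<and> fst (snd g) = adj M'"
    using orig_P by (auto simp: adjg_def)
  show "(fst g, fst (snd g)) \<in> S \<or> (\<exists>M'. (fst g, M') \<in> S \<and> fst (snd g) = adj M')"
    using g orig_P gc gl gu gi by (auto simp: C_def C2_def)
qed

lemma cg_nonspecial: "\<not> special d (cg j i)"
  using cnot_not_diag[OF Mc] by (auto simp: special_def cg_def)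

lemma P_nonspecial: "\<forall>g\<in>set P. \<not> special d g"
proof
  fix g assume "g \<in> set P"
  then obtain j where j: "j < L" "g \<in> set (pc j)" by (auto simp: P_def)
  show "\<not> special d g"
  proof (cases "special d (U ! j)")
    case True
    then show ?thesis using j cg_nonspecial by (auto simp: pc_def copy_def)
  next
    case False
    then show ?thesis using j by (simp add: pc_def)
  qed
qed

lemma special_adjg: "special d (adjg g) \<Longrightarrow> special d g"
  by (auto simp: special_def adjg_def intro: diag_adj_rev)

lemma C2_nonspecial: "\<forall>g\<in>set C2. \<not> special d g"
proof -
  have gc: "\<forall>g\<in>set (copy L). \<not> special d g" using cg_nonspecial by (auto simp: copy_def)
  have gi: "\<forall>g\<in>set (rev (map adjg P)). \<not> special d g" using P_nonspecial special_adjg by auto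
  have gu: "\<forall>g\<in>set Unod. \<not> special d g" by (auto simp: Unod_def)
  show ?thesis using gc gi gu by (auto simp: C2_def)
qed

lemma qubits_lg: "j < L \<Longrightarrow> q \<in> qubits (lg j) \<Longrightarrow> (q - n) div n = j \<and> n \<le> q"
proof -
  assume j: "j < L" and q: "q \<in> qubits (lg j)"
  then obtain r where r: "r \<in> set (snd (snd (U ! j)))" "q = n + j * n + r"
    by (auto simp: qubits_def lg_def)
  have "r < n" using qs_lt[OF j] r(1) by auto
  then show ?thesis using r(2) by simp
qed

lemma Lay_disjoint: "\<forall>i<length Lay. \<forall>j<length Lay. i \<noteq> j \<longrightarrow> qubits (Lay ! i) \<inter> qubits (Lay ! j) = {}"
proof (intro allI impI)
  fix i j assume i: "i < length Lay" and j: "j < length Lay" and ij: "i \<noteq> j"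
  define fl where "fl = filter (\<lambda>j. special d (U ! j)) [0..<L]"
  have li: "i < length fl" "j < length fl" using i j by (auto simp: Lay_def fl_def)
  have ne: "fl ! i \<noteq> fl ! j" using li ij nth_eq_iff_index_eq[of fl i j] by (simp add: fl_def)
  have lt: "fl ! i < L" "fl ! j < L" using li nth_mem[OF li(1)] nth_mem[OF li(2)] by (auto simp: fl_def)
  have "Lay ! i = lg (fl ! i)" "Lay ! j = lg (fl ! j)" using li by (auto simp: Lay_def fl_def)
  then show "qubits (Lay ! i) \<inter> qubits (Lay ! j) = {}"
  proof -
    assume e: "Lay ! i = lg (fl ! i)" "Lay ! j = lg (fl ! j)"
    show ?thesis
    proof (rule ccontr)
      assume "qubits (Lay ! i) \<inter> qubits (Lay ! j) \<noteq> {}"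
      then obtain q where "q \<in> qubits (Lay ! i)" "q \<in> qubits (Lay ! j)" by blast
      then have "q \<in> qubits (lg (fl ! i))" "q \<in> qubits (lg (fl ! j))" using e by simp_all
      then have "(q - n) div n = fl ! i" "(q - n) div n = fl ! j"
        using qubits_lg[OF lt(1)] qubits_lg[OF lt(2)] by blast+
      then show False using ne by simp
    qed
  qed
qed

end

theorem lemma2:
  fixes G :: "(nat \<times> qmat) set" and d :: nat and D :: qmat
    and n :: nat and U :: "gate_app list"
  assumes G_ac: "\<forall>(k, M)\<in>G. almost_classical k M"
    and G_cnot: "\<exists>M. (2, M) \<in> G \<and> mat_eq 2 M cnot"
    and G_D: "(d, D) \<in> G" and D_diag: "diagonal d D"
    and U_wf: "\<forall>g\<in>set U. wf_app n g"
    and U_gates: "\<forall>(k, M, qs)\<in>set U. (k, M) \<in> G"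
  shows "\<exists>m C.
     (\<forall>g\<in>set C. wf_app (n + m) g) \<and>
     (\<forall>(k, M, qs)\<in>set C. almost_classical k M) \<and>
     (\<forall>(k, M, qs)\<in>set C. (\<exists>M'. (k, M') \<in> G \<and> (mat_eq k M M' \<or> mat_eq k M (adj M')))
                          \<or> is_D_power d D (k, M, qs)) \<and>
     D_single_layer d D C \<and>
     (\<forall>x\<in>bits n. \<forall>z\<in>bits (n + m).
        circ_mat (n + m) C z (x @ replicate m False) =
        (if drop n z = replicate m False then circ_mat n U (take n z) x else 0))"
proof -
  obtain Mc where McG: "(2, Mc) \<in> G" "mat_eq 2 Mc cnot" using G_cnot by blast
  have acMc: "almost_classical 2 Mc" using G_ac McG(1) by auto
  have goodU: "\<forall>g\<in>set U. good n g"
  proof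
    fix g assume g: "g \<in> set U"
    obtain k M qs where gg: "g = (k, M, qs)" by (cases g) auto
    have "(k, M) \<in> G" using U_gates g gg by auto
    then show "good n g" using G_ac U_wf g gg by (auto simp: good_def)
  qed
  interpret constr n d U Mc using goodU McG(2) acMc by unfold_locales
  have SG: "S \<subseteq> G" using U_gates McG(1) by (auto simp: S_def)
  have refl: "\<And>k M. mat_eq k M M" by (simp add: mat_eq_def)
  have c1: "\<forall>g\<in>set C. wf_app (n + m) g" using good_C by (auto simp: good_def)
  have c2: "\<forall>(k, M, qs)\<in>set C. almost_classical k M" using good_C by (auto simp: good_def)
  have c3: "\<forall>(k, M, qs)\<in>set C. (\<exists>M'. (k, M') \<in> G \<and> (mat_eq k M M' \<or> mat_eq k M (adj M')))
                          \<or> is_D_power d D (k, M, qs)"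
  proof (intro ballI)
    fix g assume g: "g \<in> set C"
    obtain k M qs where gg: "g = (k, M, qs)" by (cases g) auto
    have "(k, M) \<in> S \<or> (\<exists>M'. (k, M') \<in> S \<and> M = adj M')" using orig_C g gg by fastforce
    then have "\<exists>M'. (k, M') \<in> G \<and> (mat_eq k M M' \<or> mat_eq k M (adj M'))" using SG refl by blast
    then show "case g of (k, M, qs) \<Rightarrow> (\<exists>M'. (k, M') \<in> G \<and> (mat_eq k M M' \<or> mat_eq k M (adj M')))
                          \<or> is_D_power d D (k, M, qs)" using gg by simp
  qed
  have nD: "\<forall>g\<in>set P \<union> set C2. \<not> is_D_power d D g"
  proof
    fix g assume g: "g \<in> set P \<union> set C2"
    obtain k M qs where gg: "g = (k, M, qs)" by (cases g) auto
    show "\<not> is_D_power d D g"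
    proof
      assume "is_D_power d D g"
      then have "special d g" using Dpow_diag[OF D_diag] gg by (simp add: special_def)
      then show False using g P_nonspecial C2_nonspecial by auto
    qed
  qed
  have c4: "D_single_layer d D C"
    unfolding D_single_layer_def using nD Lay_disjoint by (auto simp: C_def)
  have c5: "\<forall>x\<in>bits n. \<forall>z\<in>bits (n + m).
        circ_mat (n + m) C z (x @ replicate m False) =
        (if drop n z = replicate m False then circ_mat n U (take n z) x else 0)"
  proof (intro ballI)
    fix x z assume x: "x \<in> bits n" and z: "z \<in> bits (n + m)"
    have xz: "x @ replicate m False \<in> bits (n + m)" using x by (simp add: bits_def)
    have tz: "take n z \<in> bits n" using z by (simp add: bits_def)
    have e1: "circ_mat (n + m) C z (x @ replicate m False) =
       (if z = s L x @ replicate m False then (\<Prod>j<L. ph j x) else 0)"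
      using circ_run[OF good_C xz z] C_run[OF x] by simp
    have e2: "circ_mat n U (take n z) x = (if take n z = s L x then (\<Prod>j<L. ph j x) else 0)"
      using circ_run[OF goodU x tz] run_take[of L x] by (simp add: s_def)
    have lz: "length z = n + m" using z by (simp add: bits_def)
    have "(z = s L x @ replicate m False) \<longleftrightarrow> (drop n z = replicate m False \<and> take n z = s L x)"
    proof
      assume "z = s L x @ replicate m False"
      then show "drop n z = replicate m False \<and> take n z = s L x" using x by (simp add: bits_def)
    next
      assume "drop n z = replicate m False \<and> take n z = s L x"
      then show "z = s L x @ replicate m False" by (metis append_take_drop_id)
    qed
    then show "circ_mat (n + m) C z (x @ replicate m False) =
        (if drop n z = replicate m False then circ_mat n U (take n z) x else 0)"
      using e1 e2 by auto
  qed
  show ?thesis using c1 c2 c3 c4 c5 by blast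
qed

end
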